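(* For every finite simple graph $G=(V,E)$, $$\omega(\overline{X}_G)(x_1,x_2,\dots)=\sum_{W\subseteq V}(-1)^{|V\setminus W|}\prod_{i\ge1}H_{G|_W}(x_i),$$ where $H_{G|_W}(t)=1/I_{G|_W}(-t)$.
   Context: $\overline{X}_G=\sum_\kappa\prod_{v}\prod_{i\in\kappa(v)}x_i$ over proper set colorings $\kappa$ (maps $V\to$ nonempty subsets of $\mathbb{Z}_{>0}$, adjacent vertices get disjoint sets). $I_H(t)=\sum_n a_nt^n$ is the independence polynomial ($a_n$ = number of independent sets of size $n$); $H_G(t)=\sum_{n\ge0}|\mathcal{H}_G(n)|t^n$ is the generating series of heaps of $G$ by size (a heap being an equivalence class of words over $V$ under swapping adjacent nonadjacent-in-$G$ distinct letters), which equals $1/I_G(-t)$. $\omega$ is the standard involution on symmetric functions ($\omega(p_\lambda)=(-1)^{|\lambda|-\ell(\lambda)}p_\lambda$), extended degree-wise. $G|_W$ is the induced subgraph. *)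

theory Defs
  imports "HOL-Library.Poly_Mapping" "HOL-Library.FuncSet"
    "HOL-Computational_Algebra.Formal_Power_Series"
begin

text \<open>The induced subgraph on W is represented by the pair (W, E): every notion below only
  looks at edges between vertices of the given vertex set.\<close>

definition simple_graph :: "'a set \<Rightarrow> ('a \<Rightarrow> 'a \<Rightarrow> bool) \<Rightarrow> bool" where
  "simple_graph V E \<longleftrightarrow> finite V \<and> (\<forall>u v. E u v \<longrightarrow> E v u) \<and> (\<forall>v. \<not> E v v)"

text \<open>Formal power series in the countably many variables x_0, x_1, ... with rational
  coefficients, represented by their coefficient function on monomials (exponent vectors).\<close>

type_synonym mono = "nat \<Rightarrow>\<^sub>0 nat"
type_synonym mseries = "mono \<Rightarrow> rat"

definition mdeg :: "mono \<Rightarrow> nat" where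
  "mdeg \<alpha> = (\<Sum>i\<in>Poly_Mapping.keys \<alpha>. Poly_Mapping.lookup \<alpha> i)"

definition proper_set_coloring :: "'a set \<Rightarrow> ('a \<Rightarrow> 'a \<Rightarrow> bool) \<Rightarrow> ('a \<Rightarrow> nat set) \<Rightarrow> bool" where
  "proper_set_coloring V E \<kappa> \<longleftrightarrow>
     \<kappa> \<in> V \<rightarrow>\<^sub>E {S. finite S \<and> S \<noteq> {}} \<and>
     (\<forall>u\<in>V. \<forall>v\<in>V. E u v \<longrightarrow> \<kappa> u \<inter> \<kappa> v = {})"

definition coloring_mono :: "'a set \<Rightarrow> ('a \<Rightarrow> nat set) \<Rightarrow> mono" where
  "coloring_mono V \<kappa> = (\<Sum>v\<in>V. \<Sum>i\<in>\<kappa> v. Poly_Mapping.single i 1)"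

definition chromatic_set_sym :: "'a set \<Rightarrow> ('a \<Rightarrow> 'a \<Rightarrow> bool) \<Rightarrow> mseries" where
  "chromatic_set_sym V E \<alpha> =
     of_nat (card {\<kappa>. proper_set_coloring V E \<kappa> \<and> coloring_mono V \<kappa> = \<alpha>})"

definition independent :: "('a \<Rightarrow> 'a \<Rightarrow> bool) \<Rightarrow> 'a set \<Rightarrow> bool" where
  "independent E S \<longleftrightarrow> (\<forall>u\<in>S. \<forall>v\<in>S. \<not> E u v)"

definition indep_poly :: "'a set \<Rightarrow> ('a \<Rightarrow> 'a \<Rightarrow> bool) \<Rightarrow> rat fps" where
  "indep_poly V E = Abs_fps (\<lambda>n. of_nat (card {S. S \<subseteq> V \<and> independent E S \<and> card S = n}))"

definition fps_neg_var :: "rat fps \<Rightarrow> rat fps" where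
  "fps_neg_var f = Abs_fps (\<lambda>n. (-1) ^ n * fps_nth f n)"

definition heap_series :: "'a set \<Rightarrow> ('a \<Rightarrow> 'a \<Rightarrow> bool) \<Rightarrow> rat fps" where
  "heap_series V E = inverse (fps_neg_var (indep_poly V E))"

text \<open>Coefficient function of prod_{i} F(x_i) for a one-variable series F with F(0) = 1:
  the coefficient of x^alpha is prod_i [t^{alpha_i}]F (factors with alpha_i = 0 equal 1).\<close>

definition prod_all_vars :: "rat fps \<Rightarrow> mseries" where
  "prod_all_vars F \<alpha> = (\<Prod>i\<in>Poly_Mapping.keys \<alpha>. fps_nth F (Poly_Mapping.lookup \<alpha> i))"

text \<open>Power sum symmetric functions p_lambda = prod_r (sum_i x_i^{lambda_r}); the coefficient
  of x^alpha is the number of choices of variable indices j_r with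
  x^alpha = prod_r x_{j_r}^{lambda_r}.\<close>

definition partitions_of :: "nat \<Rightarrow> nat list set" where
  "partitions_of n = {lam. sorted_wrt (\<ge>) lam \<and> 0 \<notin> set lam \<and> sum_list lam = n}"

definition power_sum :: "nat list \<Rightarrow> mseries" where
  "power_sum lam \<alpha> = of_nat (card {j \<in> {..<length lam} \<rightarrow>\<^sub>E (UNIV :: nat set).
      \<alpha> = (\<Sum>r<length lam. Poly_Mapping.single (j r) (lam ! r))})"

text \<open>omega, extended degree-wise: omega f = g iff for every degree n there are coefficients
  a_lambda with f_n = sum a_lambda p_lambda and g_n = sum (-1)^(n - l(lambda)) a_lambda p_lambda.
  (Since the p_lambda are linearly independent, this determines g from symmetric f.)\<close>

definition omega_eq :: "mseries \<Rightarrow> mseries \<Rightarrow> bool" where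
  "omega_eq f g \<longleftrightarrow> (\<forall>n. \<exists>a :: nat list \<Rightarrow> rat.
     \<forall>\<alpha>. mdeg \<alpha> = n \<longrightarrow>
       f \<alpha> = (\<Sum>lam\<in>partitions_of n. a lam * power_sum lam \<alpha>) \<and>
       g \<alpha> = (\<Sum>lam\<in>partitions_of n. (-1) ^ (n - length lam) * a lam * power_sum lam \<alpha>))"

end

theory Submission
  imports Defs "HOL-Combinatorics.Permutations"
begin

unbundle fps_syntax

lemma mdeg_superset:
  assumes "finite K" "Poly_Mapping.keys a \<subseteq> K"
  shows "mdeg a = (\<Sum>i\<in>K. Poly_Mapping.lookup a i)"
  unfolding mdeg_def
  by (rule sum.mono_neutral_left) (use assms in \<open>auto simp: in_keys_iff\<close>)

lemma mdeg_add: "mdeg (a + b) = mdeg a + mdeg b"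
proof -
  let ?K = "Poly_Mapping.keys a \<union> Poly_Mapping.keys b"
  have "mdeg (a+b) = (\<Sum>i\<in>?K. Poly_Mapping.lookup (a+b) i)"
    by (rule mdeg_superset) (use keys_add[of a b] in auto)
  also have "\<dots> = (\<Sum>i\<in>?K. Poly_Mapping.lookup a i) + (\<Sum>i\<in>?K. Poly_Mapping.lookup b i)"
    by (simp add: lookup_add sum.distrib)
  also have "\<dots> = mdeg a + mdeg b"
    by (subst (1 2) mdeg_superset[of ?K]) auto
  finally show ?thesis .
qed

lemma mdeg_single[simp]: "mdeg (Poly_Mapping.single i k) = k"
  unfolding mdeg_def by (cases "k = 0") auto

lemma mdeg_zero[simp]: "mdeg 0 = 0"
  unfolding mdeg_def by simp

lemma mdeg_sum: "mdeg (\<Sum>r\<in>A. f r) = (\<Sum>r\<in>A. mdeg (f r))"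
  by (induction A rule: infinite_finite_induct) (auto simp: mdeg_add)

lemma mdeg_eq_0: "mdeg a = 0 \<longleftrightarrow> a = 0"
  unfolding mdeg_def by (auto simp: in_keys_iff intro: poly_mapping_eqI)

lemma minus_single:
  fixes a :: mono
  assumes "k \<le> Poly_Mapping.lookup a i"
  shows "Poly_Mapping.single i k + (a - Poly_Mapping.single i k) = a"
  using assms by (intro poly_mapping_eqI) (auto simp: lookup_add lookup_minus lookup_single when_def le_add_diff_inverse)

lemma mdeg_minus_single:
  assumes "k \<le> Poly_Mapping.lookup a i"
  shows "mdeg (a - Poly_Mapping.single i k) = mdeg a - k"
  using mdeg_add[of "Poly_Mapping.single i k" "a - Poly_Mapping.single i k"] minus_single[OF assms]
  by simp

lemma keys_minus_single: "(a::mono) = a \<Longrightarrow> Poly_Mapping.keys (a - Poly_Mapping.single i k) \<subseteq> Poly_Mapping.keys a"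
  by (auto simp: in_keys_iff lookup_minus diff_0_eq_0)

lemma lookup_le_mdeg: "Poly_Mapping.lookup a i \<le> mdeg a"
proof (cases "i \<in> Poly_Mapping.keys a")
  case True then show ?thesis unfolding mdeg_def
    by (intro member_le_sum) auto
qed (auto simp: in_keys_iff)

definition PA :: "nat list \<Rightarrow> mono \<Rightarrow> (nat \<Rightarrow> nat) set" where
  "PA lam \<alpha> = {j \<in> {..<length lam} \<rightarrow>\<^sub>E (UNIV :: nat set).
      \<alpha> = (\<Sum>r<length lam. Poly_Mapping.single (j r) (lam ! r))}"

lemma power_sum_PA: "power_sum lam \<alpha> = of_nat (card (PA lam \<alpha>))"
  unfolding power_sum_def PA_def by simp

lemma mdeg_PA: "j \<in> PA lam \<alpha> \<Longrightarrow> mdeg \<alpha> = sum_list lam"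
  unfolding PA_def by (auto simp: mdeg_sum sum_list_sum_nth atLeast0LessThan)

lemma add_single_iff:
  fixes \<alpha> \<beta> :: mono
  shows "\<alpha> = Poly_Mapping.single i k + \<beta> \<longleftrightarrow> k \<le> Poly_Mapping.lookup \<alpha> i \<and> \<beta> = \<alpha> - Poly_Mapping.single i k"
proof
  assume h: "\<alpha> = Poly_Mapping.single i k + \<beta>"
  then have "k \<le> Poly_Mapping.lookup \<alpha> i" by (simp add: lookup_add)
  moreover have "\<beta> = \<alpha> - Poly_Mapping.single i k" using h by simp
  ultimately show "k \<le> Poly_Mapping.lookup \<alpha> i \<and> \<beta> = \<alpha> - Poly_Mapping.single i k" by blast
next
  assume "k \<le> Poly_Mapping.lookup \<alpha> i \<and> \<beta> = \<alpha> - Poly_Mapping.single i k"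
  then show "\<alpha> = Poly_Mapping.single i k + \<beta>" using minus_single by metis
qed

lemma PA_finite:
  assumes "0 \<notin> set lam"
  shows "finite (PA lam \<alpha>)"
proof -
  have "PA lam \<alpha> \<subseteq> {..<length lam} \<rightarrow>\<^sub>E Poly_Mapping.keys \<alpha>"
  proof
    fix j assume j: "j \<in> PA lam \<alpha>"
    have "j r \<in> Poly_Mapping.keys \<alpha>" if r: "r < length lam" for r
    proof -
      have eq: "\<alpha> = (\<Sum>r<length lam. Poly_Mapping.single (j r) (lam ! r))" using j by (simp add: PA_def)
      have "Poly_Mapping.lookup \<alpha> (j r) = (\<Sum>s<length lam. Poly_Mapping.lookup (Poly_Mapping.single (j s) (lam ! s)) (j r))"
        by (subst eq) (simp add: lookup_sum)
      also have "\<dots> \<ge> Poly_Mapping.lookup (Poly_Mapping.single (j r) (lam ! r)) (j r)"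
        by (rule member_le_sum) (use r in auto)
      finally have "Poly_Mapping.lookup \<alpha> (j r) \<ge> lam ! r" by simp
      moreover have "lam ! r > 0" using assms r by (metis gr0I nth_mem)
      ultimately show ?thesis by (simp add: in_keys_iff)
    qed
    then show "j \<in> {..<length lam} \<rightarrow>\<^sub>E Poly_Mapping.keys \<alpha>" using j by (auto simp: PA_def PiE_iff)
  qed
  then show ?thesis by (rule finite_subset) (auto intro: finite_PiE)
qed

lemma PA_nil: "card (PA [] \<alpha>) = (if \<alpha> = 0 then 1 else 0)"
  unfolding PA_def by auto

lemma PA_cons:
  assumes "0 \<notin> set (k # tau)"
  shows "card (PA (k # tau) \<alpha>) =
    (\<Sum>i\<in>Poly_Mapping.keys \<alpha>. if k \<le> Poly_Mapping.lookup \<alpha> i then card (PA tau (\<alpha> - Poly_Mapping.single i k)) else 0)"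
proof -
  let ?l = "length tau"
  let ?S = "Sigma {i \<in> Poly_Mapping.keys \<alpha>. k \<le> Poly_Mapping.lookup \<alpha> i} (\<lambda>i. PA tau (\<alpha> - Poly_Mapping.single i k))"
  define f where "f j = (j 0, restrict (j \<circ> Suc) {..<?l})" for j :: "nat \<Rightarrow> nat"
  define g where "g p = (\<lambda>r. if r < Suc ?l then (if r = 0 then fst p else snd p (r - 1)) else undefined)" for p :: "nat \<times> (nat \<Rightarrow> nat)"
  have k0: "k > 0" using assms by auto
  have sumeq: "(\<Sum>r<Suc ?l. Poly_Mapping.single (j r) ((k # tau) ! r)) =
      Poly_Mapping.single (j 0) k + (\<Sum>r<?l. Poly_Mapping.single (j (Suc r)) (tau ! r))" for j
    by (subst sum.lessThan_Suc_shift) simp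
  have bij: "bij_betw f (PA (k # tau) \<alpha>) ?S"
  proof (rule bij_betw_byWitness[where f' = g])
    show "\<forall>a\<in>PA (k # tau) \<alpha>. g (f a) = a"
      by (auto simp: PA_def f_def g_def PiE_iff extensional_def fun_eq_iff)
    show "\<forall>a'\<in>?S. f (g a') = a'"
      by (auto simp: PA_def f_def g_def PiE_iff extensional_def fun_eq_iff)
    show "f ` PA (k # tau) \<alpha> \<subseteq> ?S"
    proof
      fix p assume "p \<in> f ` PA (k # tau) \<alpha>"
      then obtain j where j: "j \<in> PA (k # tau) \<alpha>" and p: "p = f j" by blast
      have eq: "\<alpha> = Poly_Mapping.single (j 0) k + (\<Sum>r<?l. Poly_Mapping.single (j (Suc r)) (tau ! r))"
        using j sumeq[of j] by (simp add: PA_def)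
      then have le: "k \<le> Poly_Mapping.lookup \<alpha> (j 0)"
        and rest: "(\<Sum>r<?l. Poly_Mapping.single (j (Suc r)) (tau ! r)) = \<alpha> - Poly_Mapping.single (j 0) k"
        using add_single_iff by blast+
      have "j 0 \<in> Poly_Mapping.keys \<alpha>" using le k0 by (simp add: in_keys_iff)
      moreover have "restrict (j \<circ> Suc) {..<?l} \<in> PA tau (\<alpha> - Poly_Mapping.single (j 0) k)"
        using rest by (auto simp: PA_def)
      ultimately show "p \<in> ?S" using le p by (auto simp: f_def)
    qed
    show "g ` ?S \<subseteq> PA (k # tau) \<alpha>"
    proof
      fix j assume "j \<in> g ` ?S"
      then obtain i j' where i: "i \<in> Poly_Mapping.keys \<alpha>" "k \<le> Poly_Mapping.lookup \<alpha> i"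
        and j': "j' \<in> PA tau (\<alpha> - Poly_Mapping.single i k)" and j: "j = g (i, j')" by blast
      have "(\<Sum>r<?l. Poly_Mapping.single (j (Suc r)) (tau ! r)) = (\<Sum>r<?l. Poly_Mapping.single (j' r) (tau ! r))"
        by (rule sum.cong) (auto simp: j g_def)
      also have "\<dots> = \<alpha> - Poly_Mapping.single i k" using j' by (simp add: PA_def)
      finally have "\<alpha> = Poly_Mapping.single (j 0) k + (\<Sum>r<?l. Poly_Mapping.single (j (Suc r)) (tau ! r))"
        using add_single_iff i by (simp add: j g_def)
      moreover have "j \<in> {..<Suc ?l} \<rightarrow>\<^sub>E UNIV" by (auto simp: j g_def PiE_iff extensional_def)
      ultimately show "j \<in> PA (k # tau) \<alpha>"
        unfolding PA_def using sumeq[of j] by simp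
    qed
  qed
  have "card (PA (k # tau) \<alpha>) = card ?S" using bij by (rule bij_betw_same_card)
  also have "\<dots> = (\<Sum>i\<in>{i \<in> Poly_Mapping.keys \<alpha>. k \<le> Poly_Mapping.lookup \<alpha> i}. card (PA tau (\<alpha> - Poly_Mapping.single i k)))"
    by (rule card_SigmaI) (use assms PA_finite in auto)
  finally show ?thesis by (simp add: sum.inter_filter)
qed

lemma PA_perm:
  assumes "mset lam = mset mu"
  shows "card (PA lam \<alpha>) = card (PA mu \<alpha>)"
proof -
  obtain p where p: "p permutes {..<length mu}" "permute_list p mu = lam"
    using mset_eq_permutation[OF assms] by blast
  have len: "length lam = length mu" using p(2) by auto
  let ?l = "length mu"
  have lamr: "lam ! r = mu ! p r" if "r < ?l" for r
    using p that permute_list_nth by metis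
  define f where "f j = restrict (j \<circ> inv p) {..<?l}" for j :: "nat \<Rightarrow> nat"
  define g where "g j = restrict (j \<circ> p) {..<?l}" for j :: "nat \<Rightarrow> nat"
  have pin: "p r < ?l" if "r < ?l" for r using p(1) that by (metis lessThan_iff permutes_in_image)
  have ipin: "inv p r < ?l" if "r < ?l" for r using permutes_inv[OF p(1)] that
    by (metis lessThan_iff permutes_in_image)
  have pinv: "p (inv p r) = r" "inv p (p r) = r" for r using p(1) permutes_inverses by metis+
  have reidx: "(\<Sum>r<?l. h (p r)) = (\<Sum>r<?l. h r)" for h :: "nat \<Rightarrow> mono"
    using sum.reindex_bij_betw[OF permutes_imp_bij[OF p(1)], of h] .
  have bij: "bij_betw f (PA lam \<alpha>) (PA mu \<alpha>)"
  proof (rule bij_betw_byWitness[where f' = g])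
    show "\<forall>a\<in>PA lam \<alpha>. g (f a) = a"
      by (auto simp: PA_def f_def g_def PiE_iff extensional_def fun_eq_iff pin pinv len)
    show "\<forall>a\<in>PA mu \<alpha>. f (g a) = a"
      by (auto simp: PA_def f_def g_def PiE_iff extensional_def fun_eq_iff ipin pinv len)
    show "f ` PA lam \<alpha> \<subseteq> PA mu \<alpha>"
    proof
      fix j' assume "j' \<in> f ` PA lam \<alpha>"
      then obtain j where j: "j \<in> PA lam \<alpha>" and j': "j' = f j" by blast
      have "\<alpha> = (\<Sum>r<?l. Poly_Mapping.single (j r) (lam ! r))" using j len by (simp add: PA_def)
      also have "\<dots> = (\<Sum>r<?l. Poly_Mapping.single (j' (p r)) (mu ! p r))"
        by (rule sum.cong) (auto simp: lamr j' f_def pin pinv)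
      also have "\<dots> = (\<Sum>r<?l. Poly_Mapping.single (j' r) (mu ! r))"
        by (rule reidx[of "\<lambda>r. Poly_Mapping.single (j' r) (mu ! r)"])
      finally show "j' \<in> PA mu \<alpha>" by (auto simp: PA_def j' f_def)
    qed
    show "g ` PA mu \<alpha> \<subseteq> PA lam \<alpha>"
    proof
      fix j assume "j \<in> g ` PA mu \<alpha>"
      then obtain j' where j': "j' \<in> PA mu \<alpha>" and j: "j = g j'" by blast
      have "\<alpha> = (\<Sum>r<?l. Poly_Mapping.single (j' r) (mu ! r))" using j' by (simp add: PA_def)
      also have "\<dots> = (\<Sum>r<?l. Poly_Mapping.single (j' (p r)) (mu ! p r))"
        by (rule reidx[of "\<lambda>r. Poly_Mapping.single (j' r) (mu ! r)", symmetric])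
      also have "\<dots> = (\<Sum>r<?l. Poly_Mapping.single (j r) (lam ! r))"
        by (rule sum.cong) (auto simp: lamr j g_def)
      finally show "j \<in> PA lam \<alpha>" using len by (auto simp: PA_def j g_def)
    qed
  qed
  then show ?thesis by (rule bij_betw_same_card)
qed

definition comps :: "nat \<Rightarrow> nat list set" where
  "comps n = {s. 0 \<notin> set s \<and> sum_list s = n}"

lemma len_le_sum: "0 \<notin> set s \<Longrightarrow> length s \<le> sum_list s"
  by (induction s) auto

lemma finite_comps: "finite (comps n)"
proof -
  have "comps n \<subseteq> {xs. set xs \<subseteq> {..n} \<and> length xs \<le> n}"
    using len_le_sum member_le_sum_list by (fastforce simp: comps_def)
  then show ?thesis by (rule finite_subset) (rule finite_lists_length_le, simp)
qed

lemma comps_0: "comps 0 = {[]}"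
  by (auto simp: comps_def) (metis list.set_intros(1) neq_Nil_conv sum_list_eq_0_iff)

lemma comps_pos:
  assumes "n > 0"
  shows "comps n = (\<lambda>(k, t). k # t) ` (SIGMA k:{1..n}. comps (n - k))"
proof
  show "comps n \<subseteq> (\<lambda>(k, t). k # t) ` (SIGMA k:{1..n}. comps (n - k))"
  proof
    fix s assume s: "s \<in> comps n"
    then obtain k t where st: "s = k # t" using assms by (cases s) (auto simp: comps_def)
    then show "s \<in> (\<lambda>(k, t). k # t) ` (SIGMA k:{1..n}. comps (n - k))"
      using s by (auto simp: comps_def image_iff)
  qed
qed (auto simp: comps_def)

lemma inj_cons: "inj_on (\<lambda>(k, t). k # t) A"
  by (auto simp: inj_on_def)

primrec bw :: "(nat \<Rightarrow> rat) \<Rightarrow> nat list \<Rightarrow> rat" where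
  "bw c [] = 1"
| "bw c (k # t) = of_nat k * c k / of_nat (k + sum_list t) * bw c t"

definition UU :: "(nat \<Rightarrow> rat) \<Rightarrow> mseries" where
  "UU c \<alpha> = (\<Sum>s\<in>comps (mdeg \<alpha>). bw c s * of_nat (card (PA s \<alpha>)))"

definition RR :: "(nat \<Rightarrow> rat) \<Rightarrow> mseries \<Rightarrow> mseries" where
  "RR c f \<alpha> = (\<Sum>i\<in>Poly_Mapping.keys \<alpha>. \<Sum>k\<in>{1..mdeg \<alpha>}.
      (if k \<le> Poly_Mapping.lookup \<alpha> i then of_nat k * c k * f (\<alpha> - Poly_Mapping.single i k) else 0))"

lemma UU_rec:
  assumes n: "mdeg \<alpha> > 0"
  shows "of_nat (mdeg \<alpha>) * UU c \<alpha> = RR c (UU c) \<alpha>"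
proof -
  let ?n = "mdeg \<alpha>"
  let ?K = "Poly_Mapping.keys \<alpha>"
  have "of_nat ?n * UU c \<alpha> = (\<Sum>k\<in>{1..?n}. \<Sum>t\<in>comps (?n - k). of_nat ?n * (bw c (k # t) * of_nat (card (PA (k # t) \<alpha>))))"
    unfolding UU_def comps_pos[OF n] sum_distrib_left
    by (subst sum.reindex[OF inj_cons]) (simp add: sum.Sigma[OF _ ] finite_comps split_def)
  also have "\<dots> = (\<Sum>k\<in>{1..?n}. \<Sum>t\<in>comps (?n - k). \<Sum>i\<in>?K.
      (if k \<le> Poly_Mapping.lookup \<alpha> i then of_nat k * c k * (bw c t * of_nat (card (PA t (\<alpha> - Poly_Mapping.single i k)))) else 0))"
  proof (intro sum.cong refl)
    fix k t assume k: "k \<in> {1..?n}" and t: "t \<in> comps (?n - k)"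
    have nz: "0 \<notin> set (k # t)" using k t by (auto simp: comps_def)
    have st: "k + sum_list t = ?n" using k t by (auto simp: comps_def)
    show "of_nat ?n * (bw c (k # t) * of_nat (card (PA (k # t) \<alpha>))) = (\<Sum>i\<in>?K.
      (if k \<le> Poly_Mapping.lookup \<alpha> i then of_nat k * c k * (bw c t * of_nat (card (PA t (\<alpha> - Poly_Mapping.single i k)))) else 0))"
      using n unfolding PA_cons[OF nz] by (simp add: st sum_distrib_left of_nat_sum if_distrib algebra_simps cong: if_cong)
  qed
  also have "\<dots> = (\<Sum>i\<in>?K. \<Sum>k\<in>{1..?n}. \<Sum>t\<in>comps (?n - k).
      (if k \<le> Poly_Mapping.lookup \<alpha> i then of_nat k * c k * (bw c t * of_nat (card (PA t (\<alpha> - Poly_Mapping.single i k)))) else 0))"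
    by (subst sum.swap) (subst (2) sum.swap, rule refl)
  also have "\<dots> = RR c (UU c) \<alpha>"
    unfolding RR_def
  proof (intro sum.cong refl)
    fix i k assume "k \<in> {1..?n}"
    show "(\<Sum>t\<in>comps (?n - k).
      (if k \<le> Poly_Mapping.lookup \<alpha> i then of_nat k * c k * (bw c t * of_nat (card (PA t (\<alpha> - Poly_Mapping.single i k)))) else 0))
      = (if k \<le> Poly_Mapping.lookup \<alpha> i then of_nat k * c k * UU c (\<alpha> - Poly_Mapping.single i k) else 0)"
      by (cases "k \<le> Poly_Mapping.lookup \<alpha> i") (simp_all add: UU_def mdeg_minus_single sum_distrib_left)
  qed
  finally show ?thesis .
qed

definition frec :: "(nat \<Rightarrow> rat) \<Rightarrow> rat fps \<Rightarrow> bool" where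
  "frec c F \<longleftrightarrow> F $ 0 = 1 \<and> (\<forall>m. of_nat m * F $ m = (\<Sum>k\<in>{1..m}. of_nat k * c k * F $ (m - k)))"

lemma pav_superset:
  assumes "finite K" "Poly_Mapping.keys \<alpha> \<subseteq> K" "F $ 0 = 1"
  shows "prod_all_vars F \<alpha> = (\<Prod>i\<in>K. F $ Poly_Mapping.lookup \<alpha> i)"
  unfolding prod_all_vars_def
  by (rule prod.mono_neutral_left) (use assms in \<open>auto simp: in_keys_iff\<close>)

lemma sum_if_le:
  fixes a n :: nat
  assumes "a \<le> n"
  shows "(\<Sum>k\<in>{1..n}. if k \<le> a then f k else 0) = (\<Sum>k\<in>{1..a}. f k)"
proof -
  have "{k \<in> {1..n}. k \<le> a} = {1..a}" using assms by auto
  then show ?thesis by (simp add: sum.inter_filter[symmetric])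
qed

lemma Phi_rec:
  assumes fr: "frec c F" and n: "mdeg \<alpha> > 0"
  shows "of_nat (mdeg \<alpha>) * prod_all_vars F \<alpha> = RR c (prod_all_vars F) \<alpha>"
proof -
  let ?n = "mdeg \<alpha>"
  let ?K = "Poly_Mapping.keys \<alpha>"
  let ?a = "Poly_Mapping.lookup \<alpha>"
  have F0: "F $ 0 = 1" using fr by (simp add: frec_def)
  have fK: "finite ?K" by simp
  have "of_nat ?n * prod_all_vars F \<alpha> = (\<Sum>i\<in>?K. of_nat (?a i) * F $ ?a i * (\<Prod>j\<in>?K - {i}. F $ ?a j))"
    unfolding prod_all_vars_def mdeg_def of_nat_sum sum_distrib_right
    by (intro sum.cong refl) (simp add: prod.remove[OF fK] mult.assoc)
  also have "\<dots> = RR c (prod_all_vars F) \<alpha>"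
    unfolding RR_def
  proof (intro sum.cong refl)
    fix i assume i: "i \<in> ?K"
    have "(\<Sum>k\<in>{1..?n}. if k \<le> ?a i then of_nat k * c k * prod_all_vars F (\<alpha> - Poly_Mapping.single i k) else 0)
        = (\<Sum>k\<in>{1..?n}. if k \<le> ?a i then of_nat k * c k * F $ (?a i - k) * (\<Prod>j\<in>?K - {i}. F $ ?a j) else 0)"
    proof (intro sum.cong refl)
      fix k assume "k \<in> {1..?n}"
      have "prod_all_vars F (\<alpha> - Poly_Mapping.single i k) = (\<Prod>j\<in>?K. F $ Poly_Mapping.lookup (\<alpha> - Poly_Mapping.single i k) j)"
        by (rule pav_superset[OF fK keys_minus_single F0]) simp
      also have "\<dots> = F $ (?a i - k) * (\<Prod>j\<in>?K - {i}. F $ Poly_Mapping.lookup (\<alpha> - Poly_Mapping.single i k) j)"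
        by (simp add: prod.remove[OF fK i] lookup_minus)
      also have "(\<Prod>j\<in>?K - {i}. F $ Poly_Mapping.lookup (\<alpha> - Poly_Mapping.single i k) j) = (\<Prod>j\<in>?K - {i}. F $ ?a j)"
        by (intro prod.cong refl) (simp add: lookup_minus lookup_single)
      finally show "(if k \<le> ?a i then of_nat k * c k * prod_all_vars F (\<alpha> - Poly_Mapping.single i k) else 0) =
        (if k \<le> ?a i then of_nat k * c k * F $ (?a i - k) * (\<Prod>j\<in>?K - {i}. F $ ?a j) else 0)"
        by (simp add: mult.assoc)
    qed
    also have "\<dots> = (\<Sum>k\<in>{1..?n}. if k \<le> ?a i then of_nat k * c k * F $ (?a i - k) else 0) * (\<Prod>j\<in>?K - {i}. F $ ?a j)"
      by (subst sum_distrib_right) (rule sum.cong, auto)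
    also have "\<dots> = (\<Sum>k\<in>{1..?a i}. of_nat k * c k * F $ (?a i - k)) * (\<Prod>j\<in>?K - {i}. F $ ?a j)"
      by (subst sum_if_le[OF lookup_le_mdeg]) (rule refl)
    also have "\<dots> = of_nat (?a i) * F $ ?a i * (\<Prod>j\<in>?K - {i}. F $ ?a j)"
      using fr by (simp add: frec_def)
    finally show "of_nat (?a i) * F $ ?a i * (\<Prod>j\<in>?K - {i}. F $ ?a j) =
      (\<Sum>k\<in>{1..?n}. if k \<le> ?a i then of_nat k * c k * prod_all_vars F (\<alpha> - Poly_Mapping.single i k) else 0)"
      by simp
  qed
  finally show ?thesis .
qed

lemma UU_eq_pav:
  assumes fr: "frec c F"
  shows "UU c \<alpha> = prod_all_vars F \<alpha>"
proof (induction "mdeg \<alpha>" arbitrary: \<alpha> rule: less_induct)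
  case less
  show ?case
  proof (cases "mdeg \<alpha> = 0")
    case True
    then have a0: "\<alpha> = 0" by (simp add: mdeg_eq_0)
    show ?thesis using a0 by (simp add: UU_def comps_0 PA_nil prod_all_vars_def)
  next
    case False
    then have n: "mdeg \<alpha> > 0" by simp
    have "RR c (UU c) \<alpha> = RR c (prod_all_vars F) \<alpha>"
      unfolding RR_def
    proof (intro sum.cong refl)
      fix i k assume k: "k \<in> {1..mdeg \<alpha>}"
      show "(if k \<le> Poly_Mapping.lookup \<alpha> i then of_nat k * c k * UU c (\<alpha> - Poly_Mapping.single i k) else 0) =
            (if k \<le> Poly_Mapping.lookup \<alpha> i then of_nat k * c k * prod_all_vars F (\<alpha> - Poly_Mapping.single i k) else 0)"
      proof (cases "k \<le> Poly_Mapping.lookup \<alpha> i")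
        case True
        have "mdeg (\<alpha> - Poly_Mapping.single i k) < mdeg \<alpha>" using k True by (simp add: mdeg_minus_single)
        then show ?thesis using less by simp
      qed simp
    qed
    then have "of_nat (mdeg \<alpha>) * UU c \<alpha> = of_nat (mdeg \<alpha>) * prod_all_vars F \<alpha>"
      using UU_rec[OF n] Phi_rec[OF fr n] by simp
    then show ?thesis using n by simp
  qed
qed

lemma frec_from_deriv:
  assumes G0: "G $ 0 = 1" and dG: "fps_deriv G = Dg * G"
    and ck: "\<And>k. k \<ge> 1 \<Longrightarrow> of_nat k * c k = Dg $ (k - 1)"
  shows "frec c G"
  unfolding frec_def
proof (intro conjI allI G0)
  fix m show "of_nat m * G $ m = (\<Sum>k\<in>{1..m}. of_nat k * c k * G $ (m - k))"
  proof (cases m)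
    case 0 then show ?thesis by simp
  next
    case (Suc m')
    have "of_nat m * G $ m = fps_deriv G $ m'" using Suc by (simp add: algebra_simps)
    also have "\<dots> = (\<Sum>i=0..m'. Dg $ i * G $ (m' - i))" by (simp add: dG fps_mult_nth)
    also have "\<dots> = (\<Sum>k\<in>{1..m}. of_nat k * c k * G $ (m - k))"
      unfolding Suc One_nat_def sum.shift_bounds_cl_Suc_ivl
    proof (intro sum.cong refl)
      fix x show "Dg $ x * G $ (m' - x) = of_nat (Suc x) * c (Suc x) * G $ (Suc m' - Suc x)"
        using ck[of "Suc x"] by simp
    qed
    finally show ?thesis .
  qed
qed

definition cF :: "rat fps \<Rightarrow> nat \<Rightarrow> rat" where
  "cF F k = (fps_deriv F * inverse F) $ (k - 1) / of_nat k"

definition cneg :: "(nat \<Rightarrow> rat) \<Rightarrow> nat \<Rightarrow> rat" where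
  "cneg c k = (-1) ^ (k - 1) * c k"

lemma frec_F:
  assumes F0: "F $ 0 = 1"
  shows "frec (cF F) F"
proof (rule frec_from_deriv[OF F0, of "fps_deriv F * inverse F"])
  have "fps_deriv F * inverse F * F = fps_deriv F * (inverse F * F)" by (simp add: mult.assoc)
  also have "\<dots> = fps_deriv F" using F0 by (simp add: inverse_mult_eq_1)
  finally show "fps_deriv F = fps_deriv F * inverse F * F" by simp
  fix k :: nat assume "k \<ge> 1"
  then show "of_nat k * cF F k = (fps_deriv F * inverse F) $ (k - 1)" by (simp add: cF_def)
qed

lemma frec_G:
  assumes F0: "F $ 0 = 1"
  shows "frec (cneg (cF F)) (inverse (fps_neg_var F))"
proof -
  define D where "D = fps_deriv F * inverse F"
  define Dg where "Dg = Abs_fps (\<lambda>i. (-1) ^ i * D $ i)"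
  define N where "N = fps_neg_var F"
  have N0: "N $ 0 = 1" using F0 by (simp add: N_def fps_neg_var_def)
  have dF: "fps_deriv F = D * F"
  proof -
    have "D * F = fps_deriv F * (inverse F * F)" by (simp add: D_def mult.assoc)
    also have "\<dots> = fps_deriv F" using F0 by (simp add: inverse_mult_eq_1)
    finally show ?thesis by simp
  qed
  have sgn: "(-1::rat) ^ j * (-1) ^ (i - j) = (-1) ^ i" if "j \<le> i" for i j :: nat
    using that by (simp add: power_add[symmetric])
  have dN: "fps_deriv N = - (Dg * N)"
  proof (rule fps_ext)
    fix i
    have "(Dg * N) $ i = (\<Sum>j=0..i. (-1) ^ i * (D $ j * F $ (i - j)))"
      unfolding fps_mult_nth
      by (intro sum.cong refl) (simp add: Dg_def N_def fps_neg_var_def sgn[symmetric] algebra_simps)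
    also have "\<dots> = (-1) ^ i * (fps_deriv F $ i)"
      by (simp add: dF fps_mult_nth sum_distrib_left)
    finally show "fps_deriv N $ i = - (Dg * N) $ i"
      by (simp add: N_def fps_neg_var_def)
  qed
  have dG: "fps_deriv (inverse N) = Dg * inverse N"
  proof -
    have "fps_deriv (inverse N) = - fps_deriv N * (inverse N)\<^sup>2"
      using N0 by (simp add: fps_inverse_deriv)
    also have "\<dots> = Dg * (N * inverse N) * inverse N"
      by (simp add: dN power2_eq_square mult.assoc)
    also have "\<dots> = Dg * inverse N" using N0 by (simp add: inverse_mult_eq_1')
    finally show ?thesis .
  qed
  show ?thesis unfolding N_def[symmetric]
  proof (rule frec_from_deriv[OF _ dG])
    show "inverse N $ 0 = 1" using N0 by simp
    fix k :: nat assume "k \<ge> 1"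
    then show "of_nat k * cneg (cF F) k = Dg $ (k - 1)"
      by (simp add: cneg_def cF_def Dg_def D_def)
  qed
qed

lemma bw_cneg:
  "0 \<notin> set s \<Longrightarrow> bw (cneg c) s = (-1) ^ (sum_list s - length s) * bw c s"
proof (induction s)
  case (Cons k t)
  have k: "k \<ge> 1" and t: "0 \<notin> set t" using Cons.prems by auto
  have lt: "length t \<le> sum_list t" using len_le_sum[OF t] .
  have e: "sum_list (k # t) - length (k # t) = (k - 1) + (sum_list t - length t)"
    using k lt by simp
  have "bw (cneg c) (k # t) = of_nat k * ((-1) ^ (k - 1) * c k) / of_nat (k + sum_list t) * ((-1) ^ (sum_list t - length t) * bw c t)"
    using Cons.IH[OF t] by (simp add: cneg_def[of c k])
  also have "\<dots> = (-1) ^ ((k - 1) + (sum_list t - length t)) * (of_nat k * c k / of_nat (k + sum_list t) * bw c t)"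
    by (simp only: power_add) (simp add: algebra_simps)
  also have "\<dots> = (-1) ^ (sum_list (k # t) - length (k # t)) * bw c (k # t)"
    by (simp only: e) simp
  finally show ?case .
qed simp

definition rsort :: "nat list \<Rightarrow> nat list" where
  "rsort s = rev (sort s)"

lemma rsort_mset: "mset (rsort s) = mset s"
  by (simp add: rsort_def)

lemma rsort_part: "s \<in> comps n \<Longrightarrow> rsort s \<in> partitions_of n"
proof -
  assume s: "s \<in> comps n"
  have "sorted_wrt (\<ge>) (rsort s)" by (simp add: rsort_def sorted_wrt_rev)
  moreover have "set (rsort s) = set s" by (simp add: rsort_def)
  moreover have "sum_list (rsort s) = sum_list s"
    by (metis rsort_mset sum_mset_sum_list)
  ultimately show ?thesis using s by (simp add: partitions_of_def comps_def)
qed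

lemma finite_parts: "finite (partitions_of n)"
  by (rule finite_subset[OF _ finite_comps[of n]]) (auto simp: partitions_of_def comps_def)

definition AA :: "(nat \<Rightarrow> rat) \<Rightarrow> nat \<Rightarrow> nat list \<Rightarrow> rat" where
  "AA c n lam = (\<Sum>s\<in>{s \<in> comps n. rsort s = lam}. bw c s)"

lemma group_parts:
  "(\<Sum>s\<in>comps n. h s * of_nat (card (PA s \<alpha>))) =
   (\<Sum>lam\<in>partitions_of n. (\<Sum>s\<in>{s \<in> comps n. rsort s = lam}. h s) * of_nat (card (PA lam \<alpha>)))"
proof -
  have "(\<Sum>s\<in>comps n. h s * of_nat (card (PA s \<alpha>))) =
      (\<Sum>lam\<in>partitions_of n. \<Sum>s\<in>{s \<in> comps n. rsort s = lam}. h s * of_nat (card (PA s \<alpha>)))"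
    by (rule sum.group[symmetric]) (auto simp: finite_comps finite_parts rsort_part)
  also have "\<dots> = (\<Sum>lam\<in>partitions_of n. (\<Sum>s\<in>{s \<in> comps n. rsort s = lam}. h s) * of_nat (card (PA lam \<alpha>)))"
    unfolding sum_distrib_right
  proof (intro sum.cong refl)
    fix lam s assume "s \<in> {s \<in> comps n. rsort s = lam}"
    then have "rsort s = lam" by simp
    then have ms: "mset s = mset lam" using rsort_mset[of s] by simp
    show "h s * of_nat (card (PA s \<alpha>)) = h s * of_nat (card (PA lam \<alpha>))" using PA_perm[OF ms, of \<alpha>] by simp
  qed
  finally show ?thesis .
qed

lemma UU_parts:
  assumes "mdeg \<alpha> = n"
  shows "UU c \<alpha> = (\<Sum>lam\<in>partitions_of n. AA c n lam * power_sum lam \<alpha>)"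
  using assms by (simp add: UU_def group_parts AA_def power_sum_PA)

lemma UU_cneg_parts:
  assumes "mdeg \<alpha> = n"
  shows "UU (cneg c) \<alpha> = (\<Sum>lam\<in>partitions_of n. (-1) ^ (n - length lam) * AA c n lam * power_sum lam \<alpha>)"
proof -
  have "UU (cneg c) \<alpha> = (\<Sum>lam\<in>partitions_of n. (\<Sum>s\<in>{s \<in> comps n. rsort s = lam}. bw (cneg c) s) * power_sum lam \<alpha>)"
    using assms by (simp add: UU_def group_parts power_sum_PA)
  also have "\<dots> = (\<Sum>lam\<in>partitions_of n. (-1) ^ (n - length lam) * AA c n lam * power_sum lam \<alpha>)"
  proof (intro sum.cong refl)
    fix lam assume "lam \<in> partitions_of n"
    have "(\<Sum>s\<in>{s \<in> comps n. rsort s = lam}. bw (cneg c) s) = (\<Sum>s\<in>{s \<in> comps n. rsort s = lam}. (-1) ^ (n - length lam) * bw c s)"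
    proof (intro sum.cong refl)
      fix s assume s: "s \<in> {s \<in> comps n. rsort s = lam}"
      have "length s = length lam" using s by (auto simp: rsort_def)
      then show "bw (cneg c) s = (-1) ^ (n - length lam) * bw c s"
        using s bw_cneg[of s c] by (simp add: comps_def)
    qed
    then show "(\<Sum>s\<in>{s \<in> comps n. rsort s = lam}. bw (cneg c) s) * power_sum lam \<alpha> =
        (-1) ^ (n - length lam) * AA c n lam * power_sum lam \<alpha>"
      by (simp add: AA_def sum_distrib_left)
  qed
  finally show ?thesis .
qed

definition properW :: "('a \<Rightarrow> 'a \<Rightarrow> bool) \<Rightarrow> 'a set \<Rightarrow> ('a \<Rightarrow> nat set) \<Rightarrow> bool" where
  "properW E W \<kappa> \<longleftrightarrow> (\<forall>u\<in>W. \<forall>v\<in>W. E u v \<longrightarrow> \<kappa> u \<inter> \<kappa> v = {})"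

definition YC :: "('a \<Rightarrow> 'a \<Rightarrow> bool) \<Rightarrow> 'a set \<Rightarrow> mono \<Rightarrow> ('a \<Rightarrow> nat set) set" where
  "YC E W \<alpha> = {\<kappa> \<in> W \<rightarrow>\<^sub>E {S. finite S}. properW E W \<kappa> \<and> coloring_mono W \<kappa> = \<alpha>}"

lemma lookup_cmono:
  assumes "finite W" "\<forall>v\<in>W. finite (\<kappa> v)"
  shows "Poly_Mapping.lookup (coloring_mono W \<kappa>) i = card {v \<in> W. i \<in> \<kappa> v}"
proof -
  have "Poly_Mapping.lookup (coloring_mono W \<kappa>) i = (\<Sum>v\<in>W. \<Sum>x\<in>\<kappa> v. if x = i then 1::nat else 0)"
    unfolding coloring_mono_def lookup_sum lookup_single when_def by (intro sum.cong refl)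
  also have "\<dots> = (\<Sum>v\<in>W. if i \<in> \<kappa> v then 1::nat else 0)"
    using assms by (intro sum.cong refl) (simp add: sum.delta)
  also have "\<dots> = card {v \<in> W. i \<in> \<kappa> v}"
    using assms by (simp add: sum.inter_filter[symmetric])
  finally show ?thesis .
qed

definition ISets :: "('a \<Rightarrow> 'a \<Rightarrow> bool) \<Rightarrow> 'a set \<Rightarrow> mono \<Rightarrow> nat \<Rightarrow> 'a set set" where
  "ISets E W \<alpha> i = {S. S \<subseteq> W \<and> independent E S \<and> card S = Poly_Mapping.lookup \<alpha> i}"

lemma YC_bij:
  assumes W: "finite W"
  shows "bij_betw (\<lambda>\<kappa>. \<lambda>i\<in>Poly_Mapping.keys \<alpha>. {v \<in> W. i \<in> \<kappa> v}) (YC E W \<alpha>)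
           (\<Pi>\<^sub>E i\<in>Poly_Mapping.keys \<alpha>. ISets E W \<alpha> i)"
proof (rule bij_betw_byWitness[where f' = "\<lambda>S. \<lambda>v\<in>W. {i \<in> Poly_Mapping.keys \<alpha>. v \<in> S i}"])
  let ?K = "Poly_Mapping.keys \<alpha>"
  have cardeq: "card {v \<in> W. i \<in> \<kappa> v} = Poly_Mapping.lookup \<alpha> i" if k: "\<kappa> \<in> YC E W \<alpha>" for \<kappa> i
  proof -
    have "\<forall>v\<in>W. finite (\<kappa> v)" using k by (auto simp: YC_def PiE_iff)
    then show ?thesis using lookup_cmono[OF W, of \<kappa> i] k by (simp add: YC_def)
  qed
  have sub: "\<kappa> v \<subseteq> ?K" if k: "\<kappa> \<in> YC E W \<alpha>" and v: "v \<in> W" for \<kappa> v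
  proof
    fix i assume i: "i \<in> \<kappa> v"
    have "card {v \<in> W. i \<in> \<kappa> v} \<noteq> 0" using i v W by auto
    then show "i \<in> ?K" using cardeq[OF k] by (simp add: in_keys_iff)
  qed
  show "\<forall>\<kappa>\<in>YC E W \<alpha>. (\<lambda>v\<in>W. {i \<in> ?K. v \<in> (\<lambda>i\<in>?K. {v \<in> W. i \<in> \<kappa> v}) i}) = \<kappa>"
  proof
    fix \<kappa> assume k: "\<kappa> \<in> YC E W \<alpha>"
    show "(\<lambda>v\<in>W. {i \<in> ?K. v \<in> (\<lambda>i\<in>?K. {v \<in> W. i \<in> \<kappa> v}) i}) = \<kappa>"
    proof
      fix v show "(\<lambda>v\<in>W. {i \<in> ?K. v \<in> (\<lambda>i\<in>?K. {v \<in> W. i \<in> \<kappa> v}) i}) v = \<kappa> v"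
        using sub[OF k, of v] k by (cases "v \<in> W") (auto simp: YC_def PiE_iff extensional_def)
    qed
  qed
  show "\<forall>S\<in>\<Pi>\<^sub>E i\<in>?K. ISets E W \<alpha> i. (\<lambda>i\<in>?K. {v \<in> W. i \<in> (\<lambda>v\<in>W. {i \<in> ?K. v \<in> S i}) v}) = S"
  proof
    fix S assume S: "S \<in> (\<Pi>\<^sub>E i\<in>?K. ISets E W \<alpha> i)"
    show "(\<lambda>i\<in>?K. {v \<in> W. i \<in> (\<lambda>v\<in>W. {i \<in> ?K. v \<in> S i}) v}) = S"
    proof
      fix i show "(\<lambda>i\<in>?K. {v \<in> W. i \<in> (\<lambda>v\<in>W. {i \<in> ?K. v \<in> S i}) v}) i = S i"
        using S by (cases "i \<in> ?K") (auto simp: ISets_def PiE_iff extensional_def)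
    qed
  qed
  show "(\<lambda>\<kappa>. \<lambda>i\<in>?K. {v \<in> W. i \<in> \<kappa> v}) ` YC E W \<alpha> \<subseteq> (\<Pi>\<^sub>E i\<in>?K. ISets E W \<alpha> i)"
  proof
    fix S assume "S \<in> (\<lambda>\<kappa>. \<lambda>i\<in>?K. {v \<in> W. i \<in> \<kappa> v}) ` YC E W \<alpha>"
    then obtain \<kappa> where k: "\<kappa> \<in> YC E W \<alpha>" and S: "S = (\<lambda>i\<in>?K. {v \<in> W. i \<in> \<kappa> v})" by blast
    have "{v \<in> W. i \<in> \<kappa> v} \<in> ISets E W \<alpha> i" for i
      using k cardeq[OF k, of i] by (auto simp: ISets_def independent_def YC_def properW_def)
    then show "S \<in> (\<Pi>\<^sub>E i\<in>?K. ISets E W \<alpha> i)" by (simp add: S)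
  qed
  show "(\<lambda>S. \<lambda>v\<in>W. {i \<in> ?K. v \<in> S i}) ` (\<Pi>\<^sub>E i\<in>?K. ISets E W \<alpha> i) \<subseteq> YC E W \<alpha>"
  proof
    fix \<kappa> assume "\<kappa> \<in> (\<lambda>S. \<lambda>v\<in>W. {i \<in> ?K. v \<in> S i}) ` (\<Pi>\<^sub>E i\<in>?K. ISets E W \<alpha> i)"
    then obtain S where S: "S \<in> (\<Pi>\<^sub>E i\<in>?K. ISets E W \<alpha> i)" and k: "\<kappa> = (\<lambda>v\<in>W. {i \<in> ?K. v \<in> S i})" by blast
    have fin: "\<forall>v\<in>W. finite (\<kappa> v)" by (simp add: k)
    have PiE: "\<kappa> \<in> W \<rightarrow>\<^sub>E {S. finite S}" using fin by (simp add: k)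
    have pr: "properW E W \<kappa>"
      using S by (fastforce simp: properW_def k ISets_def independent_def PiE_iff)
    have "Poly_Mapping.lookup (coloring_mono W \<kappa>) i = Poly_Mapping.lookup \<alpha> i" for i
    proof -
      have "Poly_Mapping.lookup (coloring_mono W \<kappa>) i = card {v \<in> W. i \<in> \<kappa> v}"
        by (rule lookup_cmono[OF W fin])
      also have "{v \<in> W. i \<in> \<kappa> v} = (if i \<in> ?K then S i else {})"
        using S by (auto simp: k ISets_def PiE_iff)
      also have "card \<dots> = Poly_Mapping.lookup \<alpha> i"
        using S by (auto simp: ISets_def PiE_iff in_keys_iff)
      finally show ?thesis .
    qed
    then have "coloring_mono W \<kappa> = \<alpha>" by (rule poly_mapping_eqI)
    then show "\<kappa> \<in> YC E W \<alpha>" using PiE pr by (simp add: YC_def)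
  qed
qed

lemma finite_ISets: "finite W \<Longrightarrow> finite (ISets E W \<alpha> i)"
  by (rule finite_subset[of _ "Pow W"]) (auto simp: ISets_def)

lemma YC_card:
  assumes W: "finite W"
  shows "prod_all_vars (indep_poly W E) \<alpha> = of_nat (card (YC E W \<alpha>))"
    and "finite (YC E W \<alpha>)"
proof -
  have "card (YC E W \<alpha>) = card (\<Pi>\<^sub>E i\<in>Poly_Mapping.keys \<alpha>. ISets E W \<alpha> i)"
    using YC_bij[OF W] by (rule bij_betw_same_card)
  also have "\<dots> = (\<Prod>i\<in>Poly_Mapping.keys \<alpha>. card (ISets E W \<alpha> i))" by (simp add: card_PiE)
  finally show "prod_all_vars (indep_poly W E) \<alpha> = of_nat (card (YC E W \<alpha>))"
    by (simp add: prod_all_vars_def indep_poly_def ISets_def)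
  show "finite (YC E W \<alpha>)"
    using bij_betw_finite[OF YC_bij[OF W]] W by (simp add: finite_PiE finite_ISets)
qed

lemma prod_ind:
  "finite X \<Longrightarrow> (\<Prod>v\<in>X. if P v then (1::rat) else 0) = (if \<forall>v\<in>X. P v then 1 else 0)"
  by (induction X rule: finite_induct) auto

lemma incl_excl:
  assumes Z: "finite Z" and V: "finite V"
  shows "(of_nat (card {z \<in> Z. \<forall>v\<in>V. \<not> P z v}) :: rat) =
         (\<Sum>T\<in>Pow V. (-1) ^ card T * of_nat (card {z \<in> Z. \<forall>v\<in>T. P z v}))"
proof -
  have cnt: "(of_nat (card {z \<in> Z. Q z}) :: rat) = (\<Sum>z\<in>Z. if Q z then 1 else 0)" for Q
    using Z by (simp add: sum.inter_filter[symmetric])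
  have "(of_nat (card {z \<in> Z. \<forall>v\<in>V. \<not> P z v}) :: rat) = (\<Sum>z\<in>Z. \<Prod>v\<in>V. (- (if P z v then 1 else 0)) + 1)"
    unfolding cnt
  proof (intro sum.cong refl)
    fix z
    have "(\<Prod>v\<in>V. (- (if P z v then 1 else 0)) + (1::rat)) = (\<Prod>v\<in>V. if \<not> P z v then 1 else 0)"
      by (intro prod.cong refl) simp
    also have "\<dots> = (if \<forall>v\<in>V. \<not> P z v then 1 else 0)" using prod_ind[OF V] .
    finally show "(if \<forall>v\<in>V. \<not> P z v then 1 else 0) = (\<Prod>v\<in>V. (- (if P z v then 1 else 0)) + (1::rat))" by simp
  qed
  also have "\<dots> = (\<Sum>z\<in>Z. \<Sum>T\<in>Pow V. (-1) ^ card T * (if \<forall>v\<in>T. P z v then 1 else 0))"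
  proof (intro sum.cong refl)
    fix z
    show "(\<Prod>v\<in>V. (- (if P z v then 1 else 0)) + (1::rat)) = (\<Sum>T\<in>Pow V. (-1) ^ card T * (if \<forall>v\<in>T. P z v then 1 else 0))"
      unfolding prod_add[OF V]
    proof (intro sum.cong refl)
      fix T assume T: "T \<in> Pow V"
      then have fT: "finite T" using V finite_subset by auto
      have "(\<Prod>v\<in>T. - (if P z v then 1 else 0)) = (\<Prod>v\<in>T. (-1::rat) * (if P z v then 1 else 0))"
        by simp
      also have "\<dots> = (\<Prod>v\<in>T. (-1::rat)) * (\<Prod>v\<in>T. if P z v then 1 else 0)"
        by (rule prod.distrib)
      also have "\<dots> = (-1) ^ card T * (if \<forall>v\<in>T. P z v then 1 else 0)"
        by (simp only: prod_ind[OF fT] prod_constant)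
      finally show "(\<Prod>v\<in>T. - (if P z v then 1 else 0)) * (\<Prod>v\<in>V - T. 1) = (-1) ^ card T * (if \<forall>v\<in>T. P z v then (1::rat) else 0)"
        by simp
    qed
  qed
  also have "\<dots> = (\<Sum>T\<in>Pow V. (-1) ^ card T * (\<Sum>z\<in>Z. if \<forall>v\<in>T. P z v then 1 else 0))"
    by (subst sum.swap) (simp add: sum_distrib_left)
  also have "\<dots> = (\<Sum>T\<in>Pow V. (-1) ^ card T * of_nat (card {z \<in> Z. \<forall>v\<in>T. P z v}))"
    unfolding cnt ..
  finally show ?thesis .
qed

lemma cmono_ext:
  assumes V: "finite V" and WV: "W \<subseteq> V" and e: "\<forall>v\<in>V - W. \<kappa>' v = {}" and eq: "\<forall>v\<in>W. \<kappa>' v = \<kappa> v"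
  shows "coloring_mono V \<kappa>' = coloring_mono W \<kappa>"
  unfolding coloring_mono_def
  by (rule sum.mono_neutral_cong_right[OF V WV]) (use e eq in auto)

lemma YC_ext:
  assumes V: "finite V" and WV: "W \<subseteq> V"
  shows "card (YC E W \<alpha>) = card {\<kappa> \<in> YC E V \<alpha>. \<forall>v\<in>V - W. \<kappa> v = {}}"
proof -
  define ext where "ext \<kappa> = (\<lambda>v. if v \<in> W then \<kappa> v else if v \<in> V then {} else undefined)" for \<kappa> :: "'a \<Rightarrow> nat set"
  have "bij_betw ext (YC E W \<alpha>) {\<kappa> \<in> YC E V \<alpha>. \<forall>v\<in>V - W. \<kappa> v = {}}"
  proof (rule bij_betw_byWitness[where f' = "\<lambda>\<kappa>. restrict \<kappa> W"])
    show "\<forall>a\<in>YC E W \<alpha>. restrict (ext a) W = a"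
      by (auto simp: YC_def ext_def PiE_iff extensional_def fun_eq_iff)
    show "\<forall>a'\<in>{\<kappa> \<in> YC E V \<alpha>. \<forall>v\<in>V - W. \<kappa> v = {}}. ext (restrict a' W) = a'"
      using WV by (auto simp: YC_def ext_def PiE_iff extensional_def fun_eq_iff)
    show "ext ` YC E W \<alpha> \<subseteq> {\<kappa> \<in> YC E V \<alpha>. \<forall>v\<in>V - W. \<kappa> v = {}}"
    proof
      fix k assume "k \<in> ext ` YC E W \<alpha>"
      then obtain \<kappa> where k: "\<kappa> \<in> YC E W \<alpha>" and kk: "k = ext \<kappa>" by blast
      have "coloring_mono V k = coloring_mono W \<kappa>"
        by (rule cmono_ext[OF V WV]) (auto simp: kk ext_def)
      moreover have "k \<in> V \<rightarrow>\<^sub>E {S. finite S}" using k WV by (auto simp: kk ext_def YC_def PiE_iff extensional_def)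
      moreover have "properW E V k" using k by (auto simp: kk ext_def YC_def properW_def)
      ultimately show "k \<in> {\<kappa> \<in> YC E V \<alpha>. \<forall>v\<in>V - W. \<kappa> v = {}}"
        using k by (auto simp: YC_def kk ext_def)
    qed
    show "(\<lambda>\<kappa>. restrict \<kappa> W) ` {\<kappa> \<in> YC E V \<alpha>. \<forall>v\<in>V - W. \<kappa> v = {}} \<subseteq> YC E W \<alpha>"
    proof
      fix k assume "k \<in> (\<lambda>\<kappa>. restrict \<kappa> W) ` {\<kappa> \<in> YC E V \<alpha>. \<forall>v\<in>V - W. \<kappa> v = {}}"
      then obtain \<kappa> where k: "\<kappa> \<in> YC E V \<alpha>" "\<forall>v\<in>V - W. \<kappa> v = {}" and kk: "k = restrict \<kappa> W" by blast
      have "coloring_mono V \<kappa> = coloring_mono W k"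
        by (rule cmono_ext[OF V WV]) (use k in \<open>auto simp: kk\<close>)
      moreover have "k \<in> W \<rightarrow>\<^sub>E {S. finite S}" using k WV by (auto simp: kk YC_def PiE_iff)
      moreover have "properW E W k"
        unfolding properW_def
      proof (intro ballI impI)
        fix u v assume uv: "u \<in> W" "v \<in> W" "E u v"
        have "properW E V \<kappa>" using k by (simp add: YC_def)
        then show "k u \<inter> k v = {}" using uv WV by (auto simp: kk properW_def)
      qed
      ultimately show "k \<in> YC E W \<alpha>" using k by (auto simp: YC_def)
    qed
  qed
  then show ?thesis by (rule bij_betw_same_card)
qed

lemma chrom_eq:
  assumes V: "finite V"
  shows "chromatic_set_sym V E \<alpha> = (\<Sum>W\<in>Pow V. (-1) ^ card (V - W) * of_nat (card (YC E W \<alpha>)))"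
proof -
  let ?Z = "YC E V \<alpha>"
  have fZ: "finite ?Z" using YC_card(2)[OF V] .
  have "{\<kappa>. proper_set_coloring V E \<kappa> \<and> coloring_mono V \<kappa> = \<alpha>} = {\<kappa> \<in> ?Z. \<forall>v\<in>V. \<not> \<kappa> v = {}}"
    by (auto simp: proper_set_coloring_def YC_def properW_def PiE_iff)
  then have "chromatic_set_sym V E \<alpha> = (\<Sum>T\<in>Pow V. (-1) ^ card T * of_nat (card {\<kappa> \<in> ?Z. \<forall>v\<in>T. \<kappa> v = {}}))"
    unfolding chromatic_set_sym_def using incl_excl[OF fZ V, of "\<lambda>\<kappa> v. \<kappa> v = {}"] by simp
  also have "\<dots> = (\<Sum>W\<in>Pow V. (-1) ^ card (V - W) * of_nat (card {\<kappa> \<in> ?Z. \<forall>v\<in>V - W. \<kappa> v = {}}))"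
  proof (rule sum.reindex_bij_betw[symmetric, where h = "\<lambda>W. V - W"])
    show "bij_betw (\<lambda>W. V - W) (Pow V) (Pow V)"
      by (rule bij_betw_byWitness[where f' = "\<lambda>W. V - W"]) auto
  qed
  also have "\<dots> = (\<Sum>W\<in>Pow V. (-1) ^ card (V - W) * of_nat (card (YC E W \<alpha>)))"
    by (intro sum.cong refl) (simp add: YC_ext[OF V])
  finally show ?thesis .
qed

lemma indep0:
  assumes "finite W"
  shows "indep_poly W E $ 0 = 1"
proof -
  have "{S. S \<subseteq> W \<and> independent E S \<and> card S = 0} = {{}}"
    using assms by (auto simp: independent_def) (metis card_0_eq empty_iff finite_subset)
  then show ?thesis by (simp add: indep_poly_def)
qed

theorem mainTheorem7:
  fixes V :: "'a set" and E :: "'a \<Rightarrow> 'a \<Rightarrow> bool"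
  assumes "simple_graph V E"
  shows "omega_eq (chromatic_set_sym V E)
           (\<lambda>\<alpha>. \<Sum>W\<in>Pow V. (-1) ^ card (V - W) * prod_all_vars (heap_series W E) \<alpha>)"
  unfolding omega_eq_def
proof
  fix n
  have V: "finite V" using assms by (simp add: simple_graph_def)
  have fW: "finite W" if "W \<in> Pow V" for W using that V finite_subset by auto
  define cW where "cW W = cF (indep_poly W E)" for W
  define a where "a lam = (\<Sum>W\<in>Pow V. (-1) ^ card (V - W) * AA (cW W) n lam)" for lam
  show "\<exists>a. \<forall>\<alpha>. mdeg \<alpha> = n \<longrightarrow>
       chromatic_set_sym V E \<alpha> = (\<Sum>lam\<in>partitions_of n. a lam * power_sum lam \<alpha>) \<and>
       (\<Sum>W\<in>Pow V. (-1) ^ card (V - W) * prod_all_vars (heap_series W E) \<alpha>) =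
         (\<Sum>lam\<in>partitions_of n. (-1) ^ (n - length lam) * a lam * power_sum lam \<alpha>)"
  proof (intro exI[of _ a] allI impI conjI)
    fix \<alpha> :: mono assume n: "mdeg \<alpha> = n"
    have "chromatic_set_sym V E \<alpha> = (\<Sum>W\<in>Pow V. (-1) ^ card (V - W) * of_nat (card (YC E W \<alpha>)))"
      by (rule chrom_eq[OF V])
    also have "\<dots> = (\<Sum>W\<in>Pow V. (-1) ^ card (V - W) * (\<Sum>lam\<in>partitions_of n. AA (cW W) n lam * power_sum lam \<alpha>))"
    proof (intro sum.cong refl)
      fix W assume W: "W \<in> Pow V"
      have "of_nat (card (YC E W \<alpha>)) = prod_all_vars (indep_poly W E) \<alpha>"
        using YC_card(1)[OF fW[OF W]] by simp
      also have "\<dots> = UU (cW W) \<alpha>"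
        unfolding cW_def by (rule UU_eq_pav[OF frec_F[OF indep0[OF fW[OF W]]], symmetric])
      also have "\<dots> = (\<Sum>lam\<in>partitions_of n. AA (cW W) n lam * power_sum lam \<alpha>)"
        by (rule UU_parts[OF n])
      finally show "(-1) ^ card (V - W) * of_nat (card (YC E W \<alpha>)) =
          (-1) ^ card (V - W) * (\<Sum>lam\<in>partitions_of n. AA (cW W) n lam * power_sum lam \<alpha>)" by simp
    qed
    also have "\<dots> = (\<Sum>lam\<in>partitions_of n. a lam * power_sum lam \<alpha>)"
      unfolding a_def sum_distrib_left sum_distrib_right
      by (subst sum.swap) (simp add: mult.assoc)
    finally show "chromatic_set_sym V E \<alpha> = (\<Sum>lam\<in>partitions_of n. a lam * power_sum lam \<alpha>)" .
    have "(\<Sum>W\<in>Pow V. (-1) ^ card (V - W) * prod_all_vars (heap_series W E) \<alpha>) =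
        (\<Sum>W\<in>Pow V. (-1) ^ card (V - W) * (\<Sum>lam\<in>partitions_of n. (-1) ^ (n - length lam) * AA (cW W) n lam * power_sum lam \<alpha>))"
    proof (intro sum.cong refl)
      fix W assume W: "W \<in> Pow V"
      have "prod_all_vars (heap_series W E) \<alpha> = UU (cneg (cW W)) \<alpha>"
        unfolding cW_def heap_series_def by (rule UU_eq_pav[OF frec_G[OF indep0[OF fW[OF W]]], symmetric])
      also have "\<dots> = (\<Sum>lam\<in>partitions_of n. (-1) ^ (n - length lam) * AA (cW W) n lam * power_sum lam \<alpha>)"
        by (rule UU_cneg_parts[OF n])
      finally show "(-1) ^ card (V - W) * prod_all_vars (heap_series W E) \<alpha> =
          (-1) ^ card (V - W) * (\<Sum>lam\<in>partitions_of n. (-1) ^ (n - length lam) * AA (cW W) n lam * power_sum lam \<alpha>)" by simp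
    qed
    also have "\<dots> = (\<Sum>lam\<in>partitions_of n. (-1) ^ (n - length lam) * a lam * power_sum lam \<alpha>)"
      unfolding a_def sum_distrib_left sum_distrib_right
      by (subst sum.swap) (simp add: algebra_simps)
    finally show "(\<Sum>W\<in>Pow V. (-1) ^ card (V - W) * prod_all_vars (heap_series W E) \<alpha>) =
         (\<Sum>lam\<in>partitions_of n. (-1) ^ (n - length lam) * a lam * power_sum lam \<alpha>)" .
  qed
qed

end
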